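(* Consider the remote control problem described in the context. Without any loss of optimality, at each time $t$ the knowledge of the encoder can be summarized by the tuple $\langle s_t,\Delta_t,s_{t-\Delta_t}\rangle$ and the knowledge of the decoder by the tuple $\langle \Delta_t,s_{t-\Delta_t}\rangle$. That is, restricting the encoder's communication policy to be a function of $\langle s_t,\Delta_t,s_{t-\Delta_t}\rangle$ and the decoder's control policy to be a function of $\langle \Delta_t,s_{t-\Delta_t}\rangle$ does not decrease the optimal value of the objective $\mathbb{E}\big[\sum_{t=0}^\infty \gamma^t (r_t-\beta c_t)\big]$ compared with general causal policies.
   Context: Let $\mathcal{S}$ be a finite state set, $\mathcal{A}$ a finite set of control actions, and for each $a\in\mathcal{A}$ let $\mathbf{P}^a$ be an $|\mathcal{S}|\times|\mathcal{S}|$ stochastic matrix ($P^a_{s,s'}$ is the probability of moving from $s$ to $s'$ under action $a$). Let $r:\mathcal{S}\times\mathcal{A}\times\mathcal{S}\to\mathbb{R}$ be a reward function, written $r_{s,s'}(a)$, let $\gamma\in[0,1)$ be a discount factor and $\beta>0$ a communication cost. A Markov process $s_0,s_1,\dots$ evolves with $s_{t+1}\sim P^{a_t}_{s_t,\cdot}$. At each time $t$ an encoder observes $s_t$ and chooses $c_t\in\{0,1\}$; the decoder then observes $o_t=s_t$ if $c_t=1$ and $o_t=\chi$ (a symbol meaning "no transmission") if $c_t=0$, and chooses a control action $a_t\in\mathcal{A}$; the reward is $r_t=r_{s_t,s_{t+1}}(a_t)$. Policies are causal: the encoder's decision at time $t$ may depend on everything it has observed up to time $t$ (states $s_{0:t}$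 and past decoder observations), and the decoder's action may depend on its observations $o_{0:t}$ and its past actions. The objective is to maximize $\mathbb{E}\big[\sum_{t=0}^\infty\gamma^t(r_t-\beta c_t)\big]$. $\Delta_t$ denotes the time elapsed since the last transmission (so $s_{t-\Delta_t}$ is the last state transmitted to the decoder). *)

theory Defs
  imports "HOL-Probability.Probability_Mass_Function"
begin

text \<open>
  Transition law: P :: 'b \<Rightarrow> 'a \<Rightarrow> 'a pmf, i.e. row s of the stochastic matrix P^a.
  Observation of the decoder: Some s (state transmitted) or None (the symbol chi).

  General (deterministic, causal, time-varying) policies:
   encoder  e :: nat \<Rightarrow> 'a list \<Rightarrow> 'a option list \<Rightarrow> bool,
     c_t = e t [s_0,...,s_t] [o_0,...,o_(t-1)]
   decoder  d :: nat \<Rightarrow> 'a option list \<Rightarrow> 'b list \<Rightarrow> 'b,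
     a_t = d t [o_0,...,o_t] [a_0,...,a_(t-1)]
\<close>

primrec obs :: "(nat \<Rightarrow> 'a list \<Rightarrow> 'a option list \<Rightarrow> bool) \<Rightarrow> 'a list \<Rightarrow> nat \<Rightarrow> 'a option list" where
  "obs e h 0 = []"
| "obs e h (Suc k) = obs e h k @
     [if e k (take (Suc k) h) (obs e h k) then Some (h ! k) else None]"

definition comm :: "(nat \<Rightarrow> 'a list \<Rightarrow> 'a option list \<Rightarrow> bool) \<Rightarrow> 'a list \<Rightarrow> nat \<Rightarrow> bool" where
  "comm e h k = e k (take (Suc k) h) (obs e h k)"

primrec acts :: "(nat \<Rightarrow> 'a list \<Rightarrow> 'a option list \<Rightarrow> bool) \<Rightarrow>
     (nat \<Rightarrow> 'a option list \<Rightarrow> 'b list \<Rightarrow> 'b) \<Rightarrow> 'a list \<Rightarrow> nat \<Rightarrow> 'b list" where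
  "acts e d h 0 = []"
| "acts e d h (Suc k) = acts e d h k @ [d k (obs e h (Suc k)) (acts e d h k)]"

definition act :: "(nat \<Rightarrow> 'a list \<Rightarrow> 'a option list \<Rightarrow> bool) \<Rightarrow>
     (nat \<Rightarrow> 'a option list \<Rightarrow> 'b list \<Rightarrow> 'b) \<Rightarrow> 'a list \<Rightarrow> nat \<Rightarrow> 'b" where
  "act e d h k = d k (obs e h (Suc k)) (acts e d h k)"

primrec hist :: "('b \<Rightarrow> 'a \<Rightarrow> 'a pmf) \<Rightarrow> 'a pmf \<Rightarrow>
     (nat \<Rightarrow> 'a list \<Rightarrow> 'a option list \<Rightarrow> bool) \<Rightarrow>
     (nat \<Rightarrow> 'a option list \<Rightarrow> 'b list \<Rightarrow> 'b) \<Rightarrow> nat \<Rightarrow> 'a list pmf" where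
  "hist P mu e d 0 = map_pmf (\<lambda>s. [s]) mu"
| "hist P mu e d (Suc t) = bind_pmf (hist P mu e d t)
     (\<lambda>h. map_pmf (\<lambda>s'. h @ [s']) (P (act e d h t) (h ! t)))"

definition stage :: "('b \<Rightarrow> 'a \<Rightarrow> 'a pmf) \<Rightarrow> 'a pmf \<Rightarrow> ('a \<Rightarrow> 'b \<Rightarrow> 'a \<Rightarrow> real) \<Rightarrow> real \<Rightarrow>
     (nat \<Rightarrow> 'a list \<Rightarrow> 'a option list \<Rightarrow> bool) \<Rightarrow>
     (nat \<Rightarrow> 'a option list \<Rightarrow> 'b list \<Rightarrow> 'b) \<Rightarrow> nat \<Rightarrow> real" where
  "stage P mu r \<beta> e d t = measure_pmf.expectation (hist P mu e d (Suc t))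
     (\<lambda>h. r (h ! t) (act e d h t) (h ! Suc t) - \<beta> * (if comm e h t then 1 else 0))"

text \<open>Objective E[sum_t gamma^t (r_t - beta c_t)] (rewards bounded, so the series converges
  absolutely and expectation and sum commute).\<close>
definition objective :: "('b \<Rightarrow> 'a \<Rightarrow> 'a pmf) \<Rightarrow> 'a pmf \<Rightarrow> ('a \<Rightarrow> 'b \<Rightarrow> 'a \<Rightarrow> real) \<Rightarrow> real \<Rightarrow> real \<Rightarrow>
     (nat \<Rightarrow> 'a list \<Rightarrow> 'a option list \<Rightarrow> bool) \<Rightarrow>
     (nat \<Rightarrow> 'a option list \<Rightarrow> 'b list \<Rightarrow> 'b) \<Rightarrow> real" where
  "objective P mu r \<gamma> \<beta> e d = (\<Sum>t. \<gamma> ^ t * stage P mu r \<beta> e d t)"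

text \<open>Last transmission seen in the observation list os, reported at time t as
  Some (Delta, s_(t-Delta)); None if nothing has been transmitted yet.\<close>
definition last_tx :: "nat \<Rightarrow> 'a option list \<Rightarrow> (nat \<times> 'a) option" where
  "last_tx t os =
     (if \<exists>i<length os. os ! i \<noteq> None
      then let i = Max {i. i < length os \<and> os ! i \<noteq> None} in Some (t - i, the (os ! i))
      else None)"

text \<open>Structured encoder: c_t = f t s_t (Delta_t, s_(t-Delta_t)), where the last transmission
  is taken among times < t (the information before deciding c_t).\<close>
definition struct_enc :: "(nat \<Rightarrow> 'a \<Rightarrow> (nat \<times> 'a) option \<Rightarrow> bool) \<Rightarrow>
     nat \<Rightarrow> 'a list \<Rightarrow> 'a option list \<Rightarrow> bool" where
  "struct_enc f = (\<lambda>t ss os. f t (last ss) (last_tx t os))"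

text \<open>Structured decoder: a_t = g t (Delta_t, s_(t-Delta_t)), last transmission among times \<le> t.\<close>
definition struct_dec :: "(nat \<Rightarrow> (nat \<times> 'a) option \<Rightarrow> 'b) \<Rightarrow>
     nat \<Rightarrow> 'a option list \<Rightarrow> 'b list \<Rightarrow> 'b" where
  "struct_dec g = (\<lambda>t os as. g t (last_tx t os))"

end

theory Submission
  imports Defs
begin


lemma length_obs[simp]: "length (obs e h k) = k"
  by (induction k) auto

lemma obs_append: "k \<le> length h \<Longrightarrow> obs e (h @ z) k = obs e h k"
  by (induction k) (auto simp: nth_append take_append)

lemma obs_take: "j \<le> k \<Longrightarrow> obs e h j = take j (obs e h k)"
proof (induction k)
  case 0 then show ?case by simp
next
  case (Suc k)
  show ?case
  proof (cases "j = Suc k")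
    case True then show ?thesis by simp
  next
    case False
    then have "j \<le> k" using Suc by simp
    then show ?thesis using Suc by (simp add: take_append)
  qed
qed

primrec actsO :: "(nat \<Rightarrow> 'a option list \<Rightarrow> 'b list \<Rightarrow> 'b) \<Rightarrow> 'a option list \<Rightarrow> nat \<Rightarrow> 'b list" where
  "actsO d os 0 = []"
| "actsO d os (Suc k) = actsO d os k @ [d k (take (Suc k) os) (actsO d os k)]"

lemma acts_actsO: "k \<le> n \<Longrightarrow> acts e d h k = actsO d (obs e h n) k"
proof (induction k)
  case 0 then show ?case by simp
next
  case (Suc k)
  then show ?case using obs_take[of "Suc k" n e h] by simp
qed

lemma act_eq: "act e d h t = d t (obs e h t @ [if comm e h t then Some (h ! t) else None]) (actsO d (obs e h t) t)"
  unfolding act_def comm_def using acts_actsO[of t t e d h] by simp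

lemma act_append: "Suc t \<le> length h \<Longrightarrow> act e d (h @ z) t = act e d h t"
proof -
  assume a: "Suc t \<le> length h"
  have o: "obs e (h @ z) (Suc t) = obs e h (Suc t)" using obs_append[OF a] .
  have "acts e d (h @ z) t = acts e d h t"
    using acts_actsO[of t "Suc t" e d "h @ z"] acts_actsO[of t "Suc t" e d h] o by (simp only: le_Suc_eq le_refl simp_thms)
  then show ?thesis unfolding act_def using o by (simp only:)
qed

lemma comm_append: "Suc t \<le> length h \<Longrightarrow> comm e (h @ z) t = comm e h t"
  unfolding comm_def using obs_append[of t h e z] by (simp add: take_append)



lemma last_tx_Some: "last_tx t (os @ [Some x]) = Some (t - length os, x)"
proof -
  have ex: "\<exists>i<length (os @ [Some x]). (os @ [Some x]) ! i \<noteq> None"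
    by (rule exI[of _ "length os"]) simp
  have "Max {i. i < length (os @ [Some x]) \<and> (os @ [Some x]) ! i \<noteq> None} = length os"
    by (rule Max_eqI) auto
  then show ?thesis using ex unfolding last_tx_def by (simp add: Let_def)
qed

lemma last_tx_None: "last_tx t (os @ [None]) = last_tx t os"
proof -
  have s: "{i. i < length (os @ [None]) \<and> (os @ [None]) ! i \<noteq> None} = {i. i < length os \<and> os ! i \<noteq> None}"
    by (auto simp: nth_append less_Suc_eq)
  have e: "(\<exists>i<length (os @ [None]). (os @ [None]) ! i \<noteq> None) = (\<exists>i<length os. os ! i \<noteq> None)"
    using s by blast
  have n: "\<And>i. i < length os \<Longrightarrow> (os @ [None]) ! i = os ! i" by (simp add: nth_append)
  show ?thesis unfolding last_tx_def e s
    by (auto simp: Let_def n intro!: n) 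
qed

lemma last_tx_Suc: "length os \<le> Suc t \<Longrightarrow> last_tx (Suc t) os = map_option (\<lambda>(D,s). (Suc D, s)) (last_tx t os)"
proof -
  assume l: "length os \<le> Suc t"
  show ?thesis
  proof (cases "\<exists>i<length os. os ! i \<noteq> None")
    case True
    let ?S = "{i. i < length os \<and> os ! i \<noteq> None}"
    have "finite ?S" by simp
    moreover have "?S \<noteq> {}" using True by auto
    ultimately have "Max ?S \<in> ?S" by (rule Max_in)
    then have "Max ?S \<le> t" using l by auto
    moreover have "last_tx (Suc t) os = Some (Suc t - Max ?S, the (os ! Max ?S))"
      unfolding last_tx_def Let_def using True by (rule if_P)
    moreover have "last_tx t os = Some (t - Max ?S, the (os ! Max ?S))"
      unfolding last_tx_def Let_def using True by (rule if_P)
    ultimately show ?thesis by (simp add: Suc_diff_le)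
  next
    case False
    have "last_tx (Suc t) os = None" unfolding last_tx_def using False by (rule if_not_P)
    moreover have "last_tx t os = None" unfolding last_tx_def using False by (rule if_not_P)
    ultimately show ?thesis by simp
  qed
qed

lemma last_tx_pos: "length os = t \<Longrightarrow> last_tx t os = Some (D, s) \<Longrightarrow> 0 < D"
proof -
  assume l: "length os = t" and lt: "last_tx t os = Some (D, s)"
  then have True: "\<exists>i<length os. os ! i \<noteq> None" unfolding last_tx_def by (auto split: if_splits)
  let ?S = "{i. i < length os \<and> os ! i \<noteq> None}"
  have "finite ?S" by simp
  moreover have "?S \<noteq> {}" using True by auto
  ultimately have "Max ?S \<in> ?S" by (rule Max_in)
  then have "Max ?S < t" using l by auto
  moreover have "last_tx t os = Some (t - Max ?S, the (os ! Max ?S))"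
      unfolding last_tx_def Let_def using True by (rule if_P)
  then have "D = t - Max ?S" using lt by simp
  ultimately show ?thesis by simp
qed

lemma last_tx_le: "last_tx t os = Some (D, s) \<Longrightarrow> D \<le> t"
  unfolding last_tx_def by (auto simp: Let_def split: if_splits)

lemma last_tx_0: "last_tx t [] = None" unfolding last_tx_def by simp



lemma pmf_integral_cong: "(\<And>x. x \<in> set_pmf M \<Longrightarrow> f x = g x) \<Longrightarrow> measure_pmf.expectation M f = measure_pmf.expectation M (g :: _ \<Rightarrow> real)"
  by (rule integral_cong_AE) (auto simp: AE_measure_pmf_iff)

lemma integral_bind_fin:
  fixes f :: "'x \<Rightarrow> real"
  assumes fM: "finite (set_pmf M)" and fN: "\<And>x. x \<in> set_pmf M \<Longrightarrow> finite (set_pmf (N x))"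
  shows "measure_pmf.expectation (bind_pmf M N) f = measure_pmf.expectation M (\<lambda>x. measure_pmf.expectation (N x) f)"
proof -
  let ?A = "set_pmf (bind_pmf M N)"
  have fA: "finite ?A" using fM fN by simp
  have "measure_pmf.expectation (bind_pmf M N) f = (\<Sum>a\<in>?A. f a * pmf (bind_pmf M N) a)"
    by (rule integral_measure_pmf_real[OF fA]) auto
  also have "\<dots> = (\<Sum>a\<in>?A. f a * (\<Sum>x\<in>set_pmf M. pmf (N x) a * pmf M x))"
    by (intro sum.cong refl, subst pmf_bind, subst integral_measure_pmf_real[OF fM]) auto
  also have "\<dots> = (\<Sum>x\<in>set_pmf M. (\<Sum>a\<in>?A. f a * pmf (N x) a) * pmf M x)"
    by (simp add: sum_distrib_left sum_distrib_right mult_ac) (rule sum.swap)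
  also have "\<dots> = (\<Sum>x\<in>set_pmf M. measure_pmf.expectation (N x) f * pmf M x)"
    by (intro sum.cong refl arg_cong2[where f="(*)"], rule integral_measure_pmf_real[symmetric, OF fA]) auto
  also have "\<dots> = measure_pmf.expectation M (\<lambda>x. measure_pmf.expectation (N x) f)"
    by (rule integral_measure_pmf_real[symmetric, OF fM]) auto
  finally show ?thesis .
qed

lemma exp_finite_UNIV:
  fixes f :: "'x::finite \<Rightarrow> real"
  shows "measure_pmf.expectation M f = (\<Sum>a\<in>UNIV. pmf M a * f a)"
  by (subst integral_measure_pmf_real[of UNIV]) (auto simp: mult.commute)

lemma set_hist: "set_pmf (hist P mu e d n) \<subseteq> {h. length h = Suc n}"
  by (induction n) auto

lemma finite_hist: "finite (set_pmf (hist P (mu :: 'a::finite pmf) e d n))"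
proof -
  have "finite {h :: 'a list. set h \<subseteq> UNIV \<and> length h = Suc n}" by (rule finite_lists_length_eq) simp
  then show ?thesis using set_hist[of P mu e d n] by (simp add: finite_subset)
qed

locale rc =
  fixes P :: "'b::finite \<Rightarrow> 'a::finite \<Rightarrow> 'a pmf" and r :: "'a \<Rightarrow> 'b \<Rightarrow> 'a \<Rightarrow> real" and \<gamma> \<beta> :: real
begin

fun Wg :: "(nat \<Rightarrow> 'a list \<Rightarrow> 'a option list \<Rightarrow> bool) \<Rightarrow> (nat \<Rightarrow> 'a option list \<Rightarrow> 'b list \<Rightarrow> 'b) \<Rightarrow> nat \<Rightarrow> nat \<Rightarrow> 'a list \<Rightarrow> real" where
  "Wg e d 0 t h = 0"
| "Wg e d (Suc k) t h = (\<Sum>s'\<in>UNIV. pmf (P (act e d h t) (h ! t)) s' *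
      (\<gamma> ^ t * (r (h ! t) (act e d h t) s' - \<beta> * (if comm e h t then 1 else 0)) + Wg e d k (Suc t) (h @ [s'])))"

lemma stage_eq: "stage P mu r \<beta> e d n = measure_pmf.expectation (hist P mu e d n)
   (\<lambda>h. \<Sum>s'\<in>UNIV. pmf (P (act e d h n) (h ! n)) s' * (r (h ! n) (act e d h n) s' - \<beta> * (if comm e h n then 1 else 0)))"
proof -
  have "stage P mu r \<beta> e d n = measure_pmf.expectation (hist P mu e d n)
     (\<lambda>h. measure_pmf.expectation (P (act e d h n) (h ! n))
        (\<lambda>s'. r ((h @ [s']) ! n) (act e d (h @ [s']) n) ((h @ [s']) ! Suc n) - \<beta> * (if comm e (h @ [s']) n then 1 else 0)))"
    unfolding stage_def hist.simps
    by (subst integral_bind_fin) (auto simp: finite_hist)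
  also have "\<dots> = measure_pmf.expectation (hist P mu e d n)
   (\<lambda>h. \<Sum>s'\<in>UNIV. pmf (P (act e d h n) (h ! n)) s' * (r (h ! n) (act e d h n) s' - \<beta> * (if comm e h n then 1 else 0)))"
    by (rule pmf_integral_cong) (auto dest!: set_hist[THEN subsetD] simp: exp_finite_UNIV nth_append act_append comm_append)
  finally show ?thesis .
qed

lemma Wg_hist: "measure_pmf.expectation (hist P mu e d n) (Wg e d k n) = (\<Sum>t\<in>{n..<n+k}. \<gamma>^t * stage P mu r \<beta> e d t)"
proof (induction k arbitrary: n)
  case 0 then show ?case by simp
next
  case (Suc k)
  define F1 where "F1 = (\<lambda>h. \<Sum>s'\<in>UNIV. pmf (P (act e d h n) (h ! n)) s' * (r (h ! n) (act e d h n) s' - \<beta> * (if comm e h n then 1 else 0)))"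
  define F2 where "F2 = (\<lambda>h. \<Sum>s'\<in>UNIV. pmf (P (act e d h n) (h ! n)) s' * Wg e d k (Suc n) (h @ [s']))"
  have pw: "Wg e d (Suc k) n h = \<gamma>^n * F1 h + F2 h" for h
    unfolding F1_def F2_def Wg.simps by (simp add: sum_distrib_left sum.distrib[symmetric] algebra_simps)
  have int: "integrable (measure_pmf (hist P mu e d n)) f" for f :: "_ \<Rightarrow> real"
    by (rule integrable_measure_pmf_finite[OF finite_hist])
  have "measure_pmf.expectation (hist P mu e d n) (Wg e d (Suc k) n) = \<gamma>^n * measure_pmf.expectation (hist P mu e d n) F1 + measure_pmf.expectation (hist P mu e d n) F2"
    unfolding pw by (simp add: int)
  also have "measure_pmf.expectation (hist P mu e d n) F1 = stage P mu r \<beta> e d n"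
    unfolding F1_def stage_eq ..
  also have "measure_pmf.expectation (hist P mu e d n) F2 = measure_pmf.expectation (hist P mu e d (Suc n)) (Wg e d k (Suc n))"
    unfolding F2_def hist.simps
    by (subst integral_bind_fin) (auto simp: finite_hist exp_finite_UNIV)
  also have "\<dots> = (\<Sum>t\<in>{Suc n..<Suc n+k}. \<gamma>^t * stage P mu r \<beta> e d t)" by (rule Suc.IH)
  finally show ?case by (simp add: sum.atLeast_Suc_lessThan)
qed

end


lemma Max_range_ge: "f z \<le> Max (range (f :: 'c::finite \<Rightarrow> real))"
  by (rule Max_ge) auto

lemma Max_range_ex: "\<exists>z. Max (range (f :: 'c::finite \<Rightarrow> real)) = f z"
proof -
  have "Max (range f) \<in> range f" by (rule Max_in) auto
  then show ?thesis by (metis imageE)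
qed

lemma Max_range_mult: "0 \<le> c \<Longrightarrow> Max (range (\<lambda>z. c * f z)) = c * Max (range (f :: 'c::finite \<Rightarrow> real))"
proof -
  assume c: "0 \<le> c"
  obtain z0 where z0: "Max (range f) = f z0" using Max_range_ex by blast
  show ?thesis
  proof (rule Max_eqI)
    show "finite (range (\<lambda>z. c * f z))" by simp
    show "y \<le> c * Max (range f)" if "y \<in> range (\<lambda>z. c * f z)" for y
      using that c Max_range_ge[of f] by (auto intro: mult_left_mono)
    show "c * Max (range f) \<in> range (\<lambda>z. c * f z)" using z0 by auto
  qed
qed

context rc begin

definition R :: "'a \<Rightarrow> 'b \<Rightarrow> real" where "R x a = (\<Sum>s'\<in>UNIV. pmf (P a x) s' * r x a s')"

definition upd :: "('a \<Rightarrow> real) \<Rightarrow> ('a \<Rightarrow> bool) \<Rightarrow> 'b \<Rightarrow> 'a \<Rightarrow> real" where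
  "upd b E a = (\<lambda>y. \<Sum>x\<in>UNIV. (if E x then 0 else b x) * pmf (P a x) y)"

fun UU :: "nat \<Rightarrow> nat \<Rightarrow> ('a \<Rightarrow> real) \<Rightarrow> real" where
  "UU 0 t b = 0"
| "UU (Suc k) t b = Max (range (\<lambda>z::('a \<Rightarrow> bool) \<times> 'b.
     (\<Sum>x\<in>UNIV. if fst z x then b x * (Max (range (\<lambda>a. \<gamma>^t * R x a + UU k (Suc t) (pmf (P a x)))) - \<gamma>^t * \<beta>)
                else b x * (\<gamma>^t * R x (snd z))) + UU k (Suc t) (upd b (fst z) (snd z))))"

definition VV :: "nat \<Rightarrow> nat \<Rightarrow> 'a \<Rightarrow> real" where
  "VV k t x = Max (range (\<lambda>a. \<gamma>^t * R x a + UU k (Suc t) (pmf (P a x))))"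

definition Qf :: "nat \<Rightarrow> nat \<Rightarrow> ('a \<Rightarrow> real) \<Rightarrow> ('a \<Rightarrow> bool) \<times> 'b \<Rightarrow> real" where
  "Qf k t b z = (\<Sum>x\<in>UNIV. if fst z x then b x * (VV k t x - \<gamma>^t * \<beta>) else b x * (\<gamma>^t * R x (snd z)))
      + UU k (Suc t) (upd b (fst z) (snd z))"

lemma UU_Suc': "UU (Suc k) t b = Max (range (Qf k t b))"
  unfolding Qf_def VV_def by simp

declare UU.simps(2)[simp del]

lemma upd_mult: "upd (\<lambda>x. c * b x) E a = (\<lambda>y. c * upd b E a y)"
  unfolding upd_def by (auto simp: sum_distrib_left mult_ac intro!: sum.cong)

lemma upd_add: "upd (\<lambda>x. b x + b' x) E a = (\<lambda>y. upd b E a y + upd b' E a y)"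
  unfolding upd_def by (auto simp: sum.distrib[symmetric] algebra_simps intro!: sum.cong)

lemma UU_mult: "0 \<le> c \<Longrightarrow> UU k t (\<lambda>x. c * b x) = c * UU k t b"
proof (induction k arbitrary: t b)
  case 0 then show ?case by simp
next
  case (Suc k)
  have "Qf k t (\<lambda>x. c * b x) z = c * Qf k t b z" for z
    unfolding Qf_def upd_mult Suc.IH[OF Suc.prems]
    by (simp add: sum_distrib_left algebra_simps if_distrib cong: if_cong)
  then show ?case unfolding UU_Suc' using Max_range_mult[OF Suc.prems, of "Qf k t b"] by simp
qed

lemma UU_add: "UU k t (\<lambda>x. b x + b' x) \<le> UU k t b + UU k t b'"
proof (induction k arbitrary: t b b')
  case 0 then show ?case by simp
next
  case (Suc k)
  have le: "Qf k t (\<lambda>x. b x + b' x) z \<le> Qf k t b z + Qf k t b' z" for z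
  proof -
    have "UU k (Suc t) (upd (\<lambda>x. b x + b' x) (fst z) (snd z)) \<le> UU k (Suc t) (upd b (fst z) (snd z)) + UU k (Suc t) (upd b' (fst z) (snd z))"
      unfolding upd_add by (rule Suc.IH)
    moreover have "(\<Sum>x\<in>UNIV. if fst z x then (b x + b' x) * (VV k t x - \<gamma>^t * \<beta>) else (b x + b' x) * (\<gamma>^t * R x (snd z)))
      = (\<Sum>x\<in>UNIV. if fst z x then b x * (VV k t x - \<gamma>^t * \<beta>) else b x * (\<gamma>^t * R x (snd z)))
      + (\<Sum>x\<in>UNIV. if fst z x then b' x * (VV k t x - \<gamma>^t * \<beta>) else b' x * (\<gamma>^t * R x (snd z)))"
      by (simp add: sum.distrib[symmetric] algebra_simps if_distrib cong: if_cong) 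
    ultimately show ?thesis unfolding Qf_def by simp
  qed
  obtain z0 where z0: "Max (range (Qf k t (\<lambda>x. b x + b' x))) = Qf k t (\<lambda>x. b x + b' x) z0" using Max_range_ex by blast
  show ?case unfolding UU_Suc' z0
    using le[of z0] Max_range_ge[of "Qf k t b" z0] Max_range_ge[of "Qf k t b'" z0] by linarith
qed

lemma UU_convex: "0 \<le> l \<Longrightarrow> l \<le> 1 \<Longrightarrow> UU k t (\<lambda>x. l * u x + (1 - l) * v x) \<le> l * UU k t u + (1 - l) * UU k t v"
  using UU_add[of k t "\<lambda>x. l * u x" "\<lambda>x. (1 - l) * v x"] UU_mult[of l k t u] UU_mult[of "1 - l" k t v] by simp

end


context rc begin

definition GG :: "nat \<Rightarrow> nat \<Rightarrow> ('a \<Rightarrow> real) \<Rightarrow> ('a \<Rightarrow> real) \<Rightarrow> ('a \<Rightarrow> 'a \<Rightarrow> real) \<Rightarrow> ('a \<Rightarrow> real) \<Rightarrow> ('a \<Rightarrow> real) \<Rightarrow> real" where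
  "GG k t A B M b0 b1 = (\<Sum>x\<in>UNIV. b1 x * A x) + (\<Sum>x\<in>UNIV. b0 x * B x) + UU k t (\<lambda>y. \<Sum>x\<in>UNIV. b0 x * M x y)"

lemma GG_convex:
  assumes "0 \<le> l" "l \<le> 1"
  shows "GG k t A B M (\<lambda>x. l * u0 x + (1 - l) * v0 x) (\<lambda>x. l * u1 x + (1 - l) * v1 x)
     \<le> l * GG k t A B M u0 u1 + (1 - l) * GG k t A B M v0 v1"
proof -
  have e: "(\<lambda>y. \<Sum>x\<in>UNIV. (l * u0 x + (1 - l) * v0 x) * M x y) = (\<lambda>y. l * (\<Sum>x\<in>UNIV. u0 x * M x y) + (1 - l) * (\<Sum>x\<in>UNIV. v0 x * M x y))"
    by (auto simp: sum_distrib_left sum.distrib[symmetric] algebra_simps intro!: sum.cong)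
  have c: "UU k t (\<lambda>y. l * (\<Sum>x\<in>UNIV. u0 x * M x y) + (1 - l) * (\<Sum>x\<in>UNIV. v0 x * M x y))
      \<le> l * UU k t (\<lambda>y. \<Sum>x\<in>UNIV. u0 x * M x y) + (1 - l) * UU k t (\<lambda>y. \<Sum>x\<in>UNIV. v0 x * M x y)"
    by (rule UU_convex[OF assms])
  have l1: "(\<Sum>x\<in>UNIV. (l * u1 x + (1 - l) * v1 x) * A x) = l * (\<Sum>x\<in>UNIV. u1 x * A x) + (1 - l) * (\<Sum>x\<in>UNIV. v1 x * A x)"
    by (simp add: sum_distrib_left sum.distrib[symmetric] algebra_simps)
  have l2: "(\<Sum>x\<in>UNIV. (l * u0 x + (1 - l) * v0 x) * B x) = l * (\<Sum>x\<in>UNIV. u0 x * B x) + (1 - l) * (\<Sum>x\<in>UNIV. v0 x * B x)"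
    by (simp add: sum_distrib_left sum.distrib[symmetric] algebra_simps)
  show ?thesis unfolding GG_def e l1 l2 using c by (simp add: algebra_simps)
qed

lemma vertex_S:
  assumes "finite S"
  shows "\<forall>b0 b1. (\<forall>x. 0 \<le> b0 x \<and> 0 \<le> b1 x) \<longrightarrow> (\<forall>x. x \<notin> S \<longrightarrow> b0 x = 0 \<or> b1 x = 0) \<longrightarrow>
    (\<exists>E. GG k t A B M b0 b1 \<le> GG k t A B M (\<lambda>x. if E x then 0 else b0 x + b1 x) (\<lambda>x. if E x then b0 x + b1 x else 0))"
  using assms
proof (induction S rule: finite_induct)
  case empty
  show ?case
  proof (intro allI impI)
    fix b0 b1 :: "'a \<Rightarrow> real"
    assume "\<forall>x. x \<notin> {} \<longrightarrow> b0 x = 0 \<or> b1 x = 0"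
    then have v: "b0 x = 0 \<or> b1 x = 0" for x by simp
    have "(\<lambda>x. if b0 x = 0 then 0 else b0 x + b1 x) = b0" using v by (auto intro!: ext) (metis add_0_right)
    moreover have "(\<lambda>x. if b0 x = 0 then b0 x + b1 x else 0) = b1" using v by (auto intro!: ext) (metis)
    ultimately show "\<exists>E. GG k t A B M b0 b1 \<le> GG k t A B M (\<lambda>x. if E x then 0 else b0 x + b1 x) (\<lambda>x. if E x then b0 x + b1 x else 0)"
      by (intro exI[of _ "\<lambda>x. b0 x = 0"]) simp
  qed
next
  case (insert x S)
  show ?case
  proof (intro allI impI)
    fix b0 b1 :: "'a \<Rightarrow> real"
    assume nn: "\<forall>x. 0 \<le> b0 x \<and> 0 \<le> b1 x" and out: "\<forall>y. y \<notin> insert x S \<longrightarrow> b0 y = 0 \<or> b1 y = 0"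
    let ?G = "GG k t A B M"
    let ?V0 = "\<lambda>E y. if E y then 0 else b0 y + b1 y"
    let ?V1 = "\<lambda>E y. if E y then b0 y + b1 y else 0"
    define m where "m = b0 x + b1 x"
    show "\<exists>E. ?G b0 b1 \<le> ?G (?V0 E) (?V1 E)"
    proof (cases "m = 0")
      case True
      then have "b0 x = 0" using nn unfolding m_def by (smt (verit))
      then have "\<forall>y. y \<notin> S \<longrightarrow> b0 y = 0 \<or> b1 y = 0" using out by auto
      then show ?thesis using insert.IH nn by blast
    next
      case False
      then have mpos: "0 < m" using nn unfolding m_def by (smt (verit))
      define l where "l = b1 x / m"
      have l0: "0 \<le> l" and l1: "l \<le> 1" using nn mpos unfolding l_def m_def by (auto simp: field_simps)
      define u0 where "u0 = b0(x := 0)"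
      define u1 where "u1 = b1(x := m)"
      define v0 where "v0 = b0(x := m)"
      define v1 where "v1 = b1(x := 0)"
      have lm: "l * m = b1 x" using mpos by (simp add: l_def)
      have lm2: "(1 - l) * m = b0 x" using lm unfolding left_diff_distrib m_def by simp
      have b0e: "b0 = (\<lambda>y. l * u0 y + (1 - l) * v0 y)"
      proof (rule ext)
        fix y show "b0 y = l * u0 y + (1 - l) * v0 y"
          using lm2 by (cases "y = x") (simp_all add: u0_def v0_def algebra_simps)
      qed
      have b1e: "b1 = (\<lambda>y. l * u1 y + (1 - l) * v1 y)"
      proof (rule ext)
        fix y show "b1 y = l * u1 y + (1 - l) * v1 y"
          using lm by (cases "y = x") (simp_all add: u1_def v1_def algebra_simps)
      qed
      have cv: "?G b0 b1 \<le> l * ?G u0 u1 + (1 - l) * ?G v0 v1"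
        using GG_convex[OF l0 l1, of k t A B M u0 v0 u1 v1] b0e b1e by simp
      have su: "u0 y + u1 y = b0 y + b1 y" for y by (simp add: u0_def u1_def m_def)
      have sv: "v0 y + v1 y = b0 y + b1 y" for y by (simp add: v0_def v1_def m_def)
      have nnu: "\<forall>y. 0 \<le> u0 y \<and> 0 \<le> u1 y" using nn mpos by (simp add: u0_def u1_def)
      have nnv: "\<forall>y. 0 \<le> v0 y \<and> 0 \<le> v1 y" using nn mpos by (simp add: v0_def v1_def)
      have ou: "\<forall>y. y \<notin> S \<longrightarrow> u0 y = 0 \<or> u1 y = 0" using out by (simp add: u0_def u1_def)
      have ov: "\<forall>y. y \<notin> S \<longrightarrow> v0 y = 0 \<or> v1 y = 0" using out by (simp add: v0_def v1_def)
      show ?thesis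
      proof (cases "?G b0 b1 \<le> ?G u0 u1")
        case True
        obtain E where "?G u0 u1 \<le> ?G (\<lambda>y. if E y then 0 else u0 y + u1 y) (\<lambda>y. if E y then u0 y + u1 y else 0)"
          using insert.IH nnu ou by blast
        then show ?thesis using True unfolding su by (intro exI[of _ E]) simp
      next
        case False
        have "?G b0 b1 \<le> ?G v0 v1"
        proof (rule ccontr)
          assume nv: "\<not> ?G b0 b1 \<le> ?G v0 v1"
          have a1: "l * ?G u0 u1 \<le> l * ?G b0 b1" using False l0 by (intro mult_left_mono) auto
          have a2: "(1 - l) * ?G v0 v1 \<le> (1 - l) * ?G b0 b1" using nv l1 by (intro mult_left_mono) auto
          show False
          proof (cases "l = 0")
            case True then show ?thesis using cv nv by simp
          next
            case lnz: False
            then have "l * ?G u0 u1 < l * ?G b0 b1" using False l0 by (intro mult_strict_left_mono) auto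
            then show ?thesis using a2 cv by (simp add: algebra_simps)
          qed
        qed
        moreover obtain E where "?G v0 v1 \<le> ?G (\<lambda>y. if E y then 0 else v0 y + v1 y) (\<lambda>y. if E y then v0 y + v1 y else 0)"
          using insert.IH nnv ov by blast
        ultimately show ?thesis unfolding sv by (intro exI[of _ E]) simp
      qed
    qed
  qed
qed

lemma vertex:
  assumes "\<And>x. 0 \<le> bu x" "\<And>x. 0 \<le> bv x"
  shows "\<exists>E. GG k t A B M bu bv \<le> GG k t A B M (\<lambda>x. if E x then 0 else bu x + bv x) (\<lambda>x. if E x then bu x + bv x else 0)"
  using vertex_S[of UNIV k t A B M] assms by simp

end


lemma sum_group:
  fixes w :: "'i \<Rightarrow> real" and xs :: "'i \<Rightarrow> 'x::finite"
  assumes "finite I"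
  shows "(\<Sum>x\<in>UNIV. (\<Sum>i\<in>I. if xs i = x \<and> Q i then w i else 0) * B x) = (\<Sum>i\<in>I. if Q i then w i * B (xs i) else 0)"
proof -
  have "(\<Sum>x\<in>UNIV. (\<Sum>i\<in>I. if xs i = x \<and> Q i then w i else 0) * B x) = (\<Sum>x\<in>UNIV. \<Sum>i\<in>I. if xs i = x then (if Q i then w i * B x else 0) else 0)"
    by (simp add: sum_distrib_right if_distrib cong: if_cong) (auto intro!: sum.cong)
  also have "\<dots> = (\<Sum>i\<in>I. \<Sum>x\<in>UNIV. if xs i = x then (if Q i then w i * B x else 0) else 0)"
    by (rule sum.swap)
  also have "\<dots> = (\<Sum>i\<in>I. if Q i then w i * B (xs i) else 0)"
    by (simp add: sum.delta)
  finally show ?thesis .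
qed

lemma sum_filter_prod:
  fixes g :: "'i \<times> 'x::finite \<Rightarrow> real"
  assumes "finite I"
  shows "(\<Sum>j\<in>{i\<in>I. Q i} \<times> UNIV. g j) = (\<Sum>i\<in>I. if Q i then (\<Sum>s\<in>UNIV. g (i, s)) else 0)"
proof -
  have "(\<Sum>j\<in>{i\<in>I. Q i} \<times> UNIV. g j) = (\<Sum>i\<in>{i\<in>I. Q i}. \<Sum>s\<in>UNIV. g (i, s))"
    by (subst sum.cartesian_product) simp
  also have "\<dots> = (\<Sum>i\<in>I. if Q i then (\<Sum>s\<in>UNIV. g (i, s)) else 0)"
    by (rule sum.inter_filter[OF assms])
  finally show ?thesis .
qed

definition a0f :: "(nat \<Rightarrow> 'a option list \<Rightarrow> 'b list \<Rightarrow> 'b) \<Rightarrow> 'a option list \<Rightarrow> nat \<Rightarrow> 'b" where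
  "a0f d os t = d t (os @ [None]) (actsO d os t)"
definition a1f :: "(nat \<Rightarrow> 'a option list \<Rightarrow> 'b list \<Rightarrow> 'b) \<Rightarrow> 'a option list \<Rightarrow> nat \<Rightarrow> 'a \<Rightarrow> 'b" where
  "a1f d os t x = d t (os @ [Some x]) (actsO d os t)"

lemma act_cases: "obs e h t = os \<Longrightarrow> act e d h t = (if comm e h t then a1f d os t (h ! t) else a0f d os t)"
  using act_eq[of e d h t] by (simp add: a0f_def a1f_def)

lemma obs_Suc_cases: "obs e h (Suc t) = obs e h t @ [if comm e h t then Some (h ! t) else None]"
  by (simp add: comm_def)

context rc begin

lemma decomp:
  assumes fI: "finite I" and H: "\<forall>i\<in>I. length (hs i) = Suc t \<and> obs e (hs i) t = os"
  shows "(\<Sum>i\<in>I. w i * Wg e d (Suc k) t (hs i)) =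
   (\<Sum>i\<in>I. if comm e (hs i) t then 0 else w i * (\<gamma>^t * R (hs i ! t) (a0f d os t)))
  + (\<Sum>j\<in>{i\<in>I. \<not> comm e (hs i) t} \<times> UNIV. (w (fst j) * pmf (P (a0f d os t) (hs (fst j) ! t)) (snd j)) * Wg e d k (Suc t) (hs (fst j) @ [snd j]))
  + (\<Sum>x\<in>UNIV. (\<Sum>i\<in>I. if comm e (hs i) t \<and> hs i ! t = x then w i * (\<gamma>^t * R x (a1f d os t x) - \<gamma>^t * \<beta>) else 0)
        + (\<Sum>j\<in>{i\<in>I. comm e (hs i) t \<and> hs i ! t = x} \<times> UNIV. (w (fst j) * pmf (P (a1f d os t x) x) (snd j)) * Wg e d k (Suc t) (hs (fst j) @ [snd j])))"
proof -
  let ?c = "\<lambda>i. comm e (hs i) t" and ?x = "\<lambda>i. hs i ! t"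
  let ?a0 = "a0f d os t" and ?a1 = "a1f d os t"
  let ?W = "\<lambda>i s. Wg e d k (Suc t) (hs i @ [s])"
  have t2: "(\<Sum>j\<in>{i\<in>I. \<not> ?c i} \<times> UNIV. (w (fst j) * pmf (P ?a0 (hs (fst j) ! t)) (snd j)) * ?W (fst j) (snd j))
     = (\<Sum>i\<in>I. if \<not> ?c i then (\<Sum>s\<in>UNIV. w i * pmf (P ?a0 (?x i)) s * ?W i s) else 0)"
    by (simp add: sum_filter_prod[OF fI] cong: if_cong)
  have t3: "(\<Sum>x\<in>UNIV. (\<Sum>i\<in>I. if ?c i \<and> ?x i = x then w i * (\<gamma>^t * R x (?a1 x) - \<gamma>^t * \<beta>) else 0)
        + (\<Sum>j\<in>{i\<in>I. ?c i \<and> ?x i = x} \<times> UNIV. (w (fst j) * pmf (P (?a1 x) x) (snd j)) * ?W (fst j) (snd j)))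
     = (\<Sum>x\<in>UNIV. \<Sum>i\<in>I. if ?x i = x then (if ?c i then w i * (\<gamma>^t * R x (?a1 x) - \<gamma>^t * \<beta>) + (\<Sum>s\<in>UNIV. w i * pmf (P (?a1 x) x) s * ?W i s) else 0) else 0)"
    by (auto simp: sum_filter_prod[OF fI] sum.distrib[symmetric] intro!: sum.cong)
  also have "\<dots> = (\<Sum>i\<in>I. \<Sum>x\<in>UNIV. if ?x i = x then (if ?c i then w i * (\<gamma>^t * R x (?a1 x) - \<gamma>^t * \<beta>) + (\<Sum>s\<in>UNIV. w i * pmf (P (?a1 x) x) s * ?W i s) else 0) else 0)"
    by (rule sum.swap)
  also have "\<dots> = (\<Sum>i\<in>I. if ?c i then w i * (\<gamma>^t * R (?x i) (?a1 (?x i)) - \<gamma>^t * \<beta>) + (\<Sum>s\<in>UNIV. w i * pmf (P (?a1 (?x i)) (?x i)) s * ?W i s) else 0)"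
    by (simp add: sum.delta)
  finally have t3': "(\<Sum>x\<in>UNIV. (\<Sum>i\<in>I. if ?c i \<and> ?x i = x then w i * (\<gamma>^t * R x (?a1 x) - \<gamma>^t * \<beta>) else 0)
        + (\<Sum>j\<in>{i\<in>I. ?c i \<and> ?x i = x} \<times> UNIV. (w (fst j) * pmf (P (?a1 x) x) (snd j)) * ?W (fst j) (snd j)))
     = (\<Sum>i\<in>I. if ?c i then w i * (\<gamma>^t * R (?x i) (?a1 (?x i)) - \<gamma>^t * \<beta>) + (\<Sum>s\<in>UNIV. w i * pmf (P (?a1 (?x i)) (?x i)) s * ?W i s) else 0)" .
  have pw: "w i * Wg e d (Suc k) t (hs i) =
      (if ?c i then 0 else w i * (\<gamma>^t * R (?x i) ?a0))
    + (if \<not> ?c i then (\<Sum>s\<in>UNIV. w i * pmf (P ?a0 (?x i)) s * ?W i s) else 0)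
    + (if ?c i then w i * (\<gamma>^t * R (?x i) (?a1 (?x i)) - \<gamma>^t * \<beta>) + (\<Sum>s\<in>UNIV. w i * pmf (P (?a1 (?x i)) (?x i)) s * ?W i s) else 0)"
    if i: "i \<in> I" for i
  proof -
    have ac: "act e d (hs i) t = (if ?c i then ?a1 (?x i) else ?a0)" using H i by (simp add: act_cases)
    have sP: "(\<Sum>s\<in>UNIV. pmf (P a y) s) = 1" for a y
      using sum_pmf_eq_1[of UNIV "P a y"] by simp
    show ?thesis
    proof (cases "?c i")
      case True
      then show ?thesis unfolding Wg.simps ac R_def
        by (simp add: sum_distrib_left sum.distrib algebra_simps sum_subtractf sum_distrib_right[symmetric] sP)
          (simp only: mult.assoc[symmetric] sum_distrib_left[symmetric] sP mult_1_right)
    next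
      case False
      then show ?thesis unfolding Wg.simps ac R_def
        by (simp add: sum_distrib_left sum.distrib algebra_simps)
    qed
  qed
  show ?thesis unfolding t2 t3' sum.distrib[symmetric] using pw by (auto intro!: sum.cong)
qed

end


context rc begin

lemma new_hist:
  assumes H: "\<forall>i\<in>I. length (hs i) = Suc t \<and> obs e (hs i) t = os" and j: "j \<in> {i\<in>I. Q i} \<times> (UNIV :: 'a set)"
  shows "length (hs (fst j) @ [snd j]) = Suc (Suc t) \<and>
     obs e (hs (fst j) @ [snd j]) (Suc t) = os @ [if comm e (hs (fst j)) t then Some (hs (fst j) ! t) else None]"
proof -
  have i: "fst j \<in> I" using j by auto
  then have l: "length (hs (fst j)) = Suc t" and o: "obs e (hs (fst j)) t = os" using H by auto
  have "obs e (hs (fst j) @ [snd j]) (Suc t) = obs e (hs (fst j)) (Suc t)" using l by (simp only: obs_append le_refl)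
  then show ?thesis using l o obs_Suc_cases[of e "hs (fst j)" t] by (simp del: obs.simps)
qed

lemma agg_new:
  fixes hs :: "'i \<Rightarrow> 'a list"
  assumes fI: "finite I" and H: "\<forall>i\<in>I. length (hs i) = Suc t"
  shows "(\<lambda>y. \<Sum>j\<in>{i\<in>I. Q i} \<times> UNIV. if (hs (fst j) @ [snd j]) ! Suc t = y then w (fst j) * pmf (P (aa (hs (fst j) ! t)) (hs (fst j) ! t)) (snd j) else 0)
     = (\<lambda>y. \<Sum>x\<in>UNIV. (\<Sum>i\<in>I. if hs i ! t = x \<and> Q i then w i else 0) * pmf (P (aa x) x) y)"
proof
  fix y
  have "(\<Sum>j\<in>{i\<in>I. Q i} \<times> UNIV. if (hs (fst j) @ [snd j]) ! Suc t = y then w (fst j) * pmf (P (aa (hs (fst j) ! t)) (hs (fst j) ! t)) (snd j) else 0)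
     = (\<Sum>i\<in>I. if Q i then (\<Sum>s\<in>UNIV. if (hs i @ [s]) ! Suc t = y then w i * pmf (P (aa (hs i ! t)) (hs i ! t)) s else 0) else 0)"
    by (simp add: sum_filter_prod[OF fI] cong: if_cong)
  also have "\<dots> = (\<Sum>i\<in>I. if Q i then w i * pmf (P (aa (hs i ! t)) (hs i ! t)) y else 0)"
    using H by (intro sum.cong refl) (simp add: nth_append sum.delta')
  also have "\<dots> = (\<Sum>x\<in>UNIV. (\<Sum>i\<in>I. if hs i ! t = x \<and> Q i then w i else 0) * pmf (P (aa x) x) y)"
    by (rule sum_group[OF fI, symmetric])
  finally show "(\<Sum>j\<in>{i\<in>I. Q i} \<times> UNIV. if (hs (fst j) @ [snd j]) ! Suc t = y then w (fst j) * pmf (P (aa (hs (fst j) ! t)) (hs (fst j) ! t)) (snd j) else 0)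
     = (\<Sum>x\<in>UNIV. (\<Sum>i\<in>I. if hs i ! t = x \<and> Q i then w i else 0) * pmf (P (aa x) x) y)" .
qed

end


context rc begin

lemma GG_vertex_Qf:
  "GG k (Suc t) (\<lambda>x. VV k t x - \<gamma>^t * \<beta>) (\<lambda>x. \<gamma>^t * R x a0) (\<lambda>x y. pmf (P a0 x) y)
      (\<lambda>x. if E x then 0 else b x) (\<lambda>x. if E x then b x else 0) = Qf k t b (E, a0)"
  unfolding GG_def Qf_def upd_def
  by (auto simp: sum.distrib[symmetric] intro!: sum.cong)

lemma agg1:
  fixes hs :: "'i \<Rightarrow> 'a list"
  assumes fI: "finite I" and H: "\<forall>i\<in>I. length (hs i) = Suc t"
  shows "(\<lambda>y. \<Sum>j\<in>{i\<in>I. Q i \<and> hs i ! t = x} \<times> UNIV. if (hs (fst j) @ [snd j]) ! Suc t = y then w (fst j) * pmf M (snd j) else 0)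
     = (\<lambda>y. (\<Sum>i\<in>I. if hs i ! t = x \<and> Q i then w i else 0) * pmf M y)"
proof
  fix y
  have "(\<Sum>j\<in>{i\<in>I. Q i \<and> hs i ! t = x} \<times> UNIV. if (hs (fst j) @ [snd j]) ! Suc t = y then w (fst j) * pmf M (snd j) else 0)
     = (\<Sum>i\<in>I. if Q i \<and> hs i ! t = x then (\<Sum>s\<in>UNIV. if (hs i @ [s]) ! Suc t = y then w i * pmf M s else 0) else 0)"
    by (simp add: sum_filter_prod[OF fI] cong: if_cong)
  also have "\<dots> = (\<Sum>i\<in>I. if hs i ! t = x \<and> Q i then w i * pmf M y else 0)"
    using H by (intro sum.cong refl) (auto simp: nth_append sum.delta')
  also have "\<dots> = (\<Sum>i\<in>I. if hs i ! t = x \<and> Q i then w i else 0) * pmf M y"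
    by (auto simp: sum_distrib_right intro!: sum.cong)
  finally show "(\<Sum>j\<in>{i\<in>I. Q i \<and> hs i ! t = x} \<times> UNIV. if (hs (fst j) @ [snd j]) ! Suc t = y then w (fst j) * pmf M (snd j) else 0)
     = (\<Sum>i\<in>I. if hs i ! t = x \<and> Q i then w i else 0) * pmf M y" .
qed

lemma reidx: "sum F ((\<lambda>p. fst p @ [snd p]) ` A) = sum (\<lambda>p. F (fst p @ [snd p])) (A :: ('a list \<times> 'a) set)"
  by (rule sum.reindex[unfolded comp_def]) (auto simp: inj_on_def)

lemma UB:
  fixes I :: "'a list set" and hs :: "'a list \<Rightarrow> 'a list"
  shows "finite I \<Longrightarrow> \<forall>i\<in>I. length (hs i) = Suc t \<and> obs e (hs i) t = os \<Longrightarrow> \<forall>i\<in>I. 0 \<le> w i \<Longrightarrow>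
   (\<Sum>i\<in>I. w i * Wg e d k t (hs i)) \<le> UU k t (\<lambda>x. \<Sum>i\<in>I. if hs i ! t = x then w i else 0)"
proof (induction k arbitrary: t I hs w os)
  case 0 then show ?case by simp
next
  case (Suc k)
  note fI = Suc.prems(1) and H = Suc.prems(2) and wn = Suc.prems(3)
  let ?c = "\<lambda>i. comm e (hs i) t"
  define a0 where "a0 = a0f d os t"
  define a1 where "a1 = a1f d os t"
  define b0 where "b0 x = (\<Sum>i\<in>I. if hs i ! t = x \<and> \<not> ?c i then w i else 0)" for x
  define b1 where "b1 x = (\<Sum>i\<in>I. if hs i ! t = x \<and> ?c i then w i else 0)" for x
  have Hl: "\<forall>i\<in>I. length (hs i) = Suc t" using H by simp
  have b_eq: "(\<lambda>x. \<Sum>i\<in>I. if hs i ! t = x then w i else 0) = (\<lambda>x. b0 x + b1 x)"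
    unfolding b0_def b1_def by (auto simp: sum.distrib[symmetric] intro!: sum.cong)
  have b0n: "0 \<le> b0 x" for x unfolding b0_def using wn by (auto intro!: sum_nonneg)
  have b1n: "0 \<le> b1 x" for x unfolding b1_def using wn by (auto intro!: sum_nonneg)
  have T1: "(\<Sum>i\<in>I. if ?c i then 0 else w i * (\<gamma>^t * R (hs i ! t) a0)) = (\<Sum>x\<in>UNIV. b0 x * (\<gamma>^t * R x a0))"
    unfolding b0_def sum_group[OF fI] by (auto intro!: sum.cong)
  have T2: "(\<Sum>j\<in>{i\<in>I. \<not> ?c i} \<times> UNIV. (w (fst j) * pmf (P a0 (hs (fst j) ! t)) (snd j)) * Wg e d k (Suc t) (hs (fst j) @ [snd j]))
     \<le> UU k (Suc t) (\<lambda>y. \<Sum>x\<in>UNIV. b0 x * pmf (P a0 x) y)"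
  proof -
    have "(\<Sum>j\<in>{i\<in>I. \<not> ?c i} \<times> UNIV. (w (fst j) * pmf (P a0 (hs (fst j) ! t)) (snd j)) * Wg e d k (Suc t) (hs (fst j) @ [snd j]))
      \<le> UU k (Suc t) (\<lambda>y. \<Sum>j\<in>{i\<in>I. \<not> ?c i} \<times> UNIV. if (hs (fst j) @ [snd j]) ! Suc t = y then w (fst j) * pmf (P a0 (hs (fst j) ! t)) (snd j) else 0)"
    proof -
      let ?J = "(\<lambda>p. fst p @ [snd p]) ` ({i\<in>I. \<not> ?c i} \<times> (UNIV :: 'a set))"
      have "(\<Sum>j\<in>?J. (w (butlast j) * pmf (P a0 (hs (butlast j) ! t)) (last j)) * Wg e d k (Suc t) (hs (butlast j) @ [last j]))
         \<le> UU k (Suc t) (\<lambda>y. \<Sum>j\<in>?J. if (hs (butlast j) @ [last j]) ! Suc t = y then w (butlast j) * pmf (P a0 (hs (butlast j) ! t)) (last j) else 0)"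
      proof (rule Suc.IH[where os = "os @ [None]"])
        show "finite ?J" using fI by simp
        show "\<forall>j\<in>?J. length (hs (butlast j) @ [last j]) = Suc (Suc t) \<and> obs e (hs (butlast j) @ [last j]) (Suc t) = os @ [None]"
          using new_hist[OF H, of _ "\<lambda>i. \<not> ?c i"] by (auto simp del: obs.simps)
        show "\<forall>j\<in>?J. 0 \<le> w (butlast j) * pmf (P a0 (hs (butlast j) ! t)) (last j)"
          using wn by auto
      qed
      then show ?thesis unfolding reidx by (simp cong: if_cong)
    qed
    also have "\<dots> = UU k (Suc t) (\<lambda>y. \<Sum>x\<in>UNIV. b0 x * pmf (P a0 x) y)"
      using agg_new[OF fI Hl, where Q = "\<lambda>i. \<not> ?c i" and w = w and aa = "\<lambda>_. a0"] unfolding b0_def by simp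
    finally show ?thesis .
  qed
  have T3: "(\<Sum>i\<in>I. if ?c i \<and> hs i ! t = x then w i * (\<gamma>^t * R x (a1 x) - \<gamma>^t * \<beta>) else 0)
        + (\<Sum>j\<in>{i\<in>I. ?c i \<and> hs i ! t = x} \<times> UNIV. (w (fst j) * pmf (P (a1 x) x) (snd j)) * Wg e d k (Suc t) (hs (fst j) @ [snd j]))
     \<le> b1 x * (VV k t x - \<gamma>^t * \<beta>)" for x
  proof -
    have f1: "(\<Sum>i\<in>I. if ?c i \<and> hs i ! t = x then w i * (\<gamma>^t * R x (a1 x) - \<gamma>^t * \<beta>) else 0) = b1 x * (\<gamma>^t * R x (a1 x) - \<gamma>^t * \<beta>)"
      unfolding b1_def by (auto simp: sum_distrib_right intro!: sum.cong)
    have "(\<Sum>j\<in>{i\<in>I. ?c i \<and> hs i ! t = x} \<times> UNIV. (w (fst j) * pmf (P (a1 x) x) (snd j)) * Wg e d k (Suc t) (hs (fst j) @ [snd j]))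
      \<le> UU k (Suc t) (\<lambda>y. \<Sum>j\<in>{i\<in>I. ?c i \<and> hs i ! t = x} \<times> UNIV. if (hs (fst j) @ [snd j]) ! Suc t = y then w (fst j) * pmf (P (a1 x) x) (snd j) else 0)"
    proof -
      let ?J = "(\<lambda>p. fst p @ [snd p]) ` ({i\<in>I. ?c i \<and> hs i ! t = x} \<times> (UNIV :: 'a set))"
      have "(\<Sum>j\<in>?J. (w (butlast j) * pmf (P (a1 x) x) (last j)) * Wg e d k (Suc t) (hs (butlast j) @ [last j]))
         \<le> UU k (Suc t) (\<lambda>y. \<Sum>j\<in>?J. if (hs (butlast j) @ [last j]) ! Suc t = y then w (butlast j) * pmf (P (a1 x) x) (last j) else 0)"
      proof (rule Suc.IH[where os = "os @ [Some x]"])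
        show "finite ?J" using fI by simp
        show "\<forall>j\<in>?J. length (hs (butlast j) @ [last j]) = Suc (Suc t) \<and> obs e (hs (butlast j) @ [last j]) (Suc t) = os @ [Some x]"
          using new_hist[OF H, of _ "\<lambda>i. ?c i \<and> hs i ! t = x"] by (auto simp del: obs.simps)
        show "\<forall>j\<in>?J. 0 \<le> w (butlast j) * pmf (P (a1 x) x) (last j)"
          using wn by auto
      qed
      then show ?thesis unfolding reidx by (simp cong: if_cong)
    qed
    also have "\<dots> = UU k (Suc t) (\<lambda>y. b1 x * pmf (P (a1 x) x) y)"
      using agg1[OF fI Hl, where Q = ?c and x = x and w = w and M = "P (a1 x) x"] unfolding b1_def by simp
    also have "\<dots> = b1 x * UU k (Suc t) (pmf (P (a1 x) x))"
      using UU_mult[OF b1n, where k = k and t = "Suc t" and b = "pmf (P (a1 x) x)"] by simp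
    finally have f2: "(\<Sum>j\<in>{i\<in>I. ?c i \<and> hs i ! t = x} \<times> UNIV. (w (fst j) * pmf (P (a1 x) x) (snd j)) * Wg e d k (Suc t) (hs (fst j) @ [snd j]))
        \<le> b1 x * UU k (Suc t) (pmf (P (a1 x) x))" .
    have "\<gamma>^t * R x (a1 x) + UU k (Suc t) (pmf (P (a1 x) x)) \<le> VV k t x"
      unfolding VV_def by (rule Max_range_ge[of "\<lambda>a. \<gamma>^t * R x a + UU k (Suc t) (pmf (P a x))"])
    then have "b1 x * (\<gamma>^t * R x (a1 x) + UU k (Suc t) (pmf (P (a1 x) x)) - \<gamma>^t * \<beta>) \<le> b1 x * (VV k t x - \<gamma>^t * \<beta>)"
      using b1n by (intro mult_left_mono) auto
    then show ?thesis using f1 f2 by (simp add: algebra_simps)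
  qed
  have "(\<Sum>i\<in>I. w i * Wg e d (Suc k) t (hs i)) \<le>
      (\<Sum>x\<in>UNIV. b0 x * (\<gamma>^t * R x a0)) + UU k (Suc t) (\<lambda>y. \<Sum>x\<in>UNIV. b0 x * pmf (P a0 x) y)
      + (\<Sum>x\<in>UNIV. b1 x * (VV k t x - \<gamma>^t * \<beta>))"
    unfolding decomp[OF fI H, where w = w and k = k and d = d] a0_def[symmetric] a1_def[symmetric] T1
    using T2 sum_mono[of UNIV _ "\<lambda>x. b1 x * (VV k t x - \<gamma>^t * \<beta>)", OF T3] by simp
  also have "\<dots> = GG k (Suc t) (\<lambda>x. VV k t x - \<gamma>^t * \<beta>) (\<lambda>x. \<gamma>^t * R x a0) (\<lambda>x y. pmf (P a0 x) y) b0 b1"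
    unfolding GG_def by simp
  also obtain E where "\<dots> \<le> GG k (Suc t) (\<lambda>x. VV k t x - \<gamma>^t * \<beta>) (\<lambda>x. \<gamma>^t * R x a0) (\<lambda>x y. pmf (P a0 x) y)
       (\<lambda>x. if E x then 0 else b0 x + b1 x) (\<lambda>x. if E x then b0 x + b1 x else 0)"
    using vertex[where bu = b0 and bv = b1, OF b0n b1n] by blast
  also have "\<dots> = Qf k t (\<lambda>x. b0 x + b1 x) (E, a0)" by (rule GG_vertex_Qf)
  also have "\<dots> \<le> UU (Suc k) t (\<lambda>x. b0 x + b1 x)" unfolding UU_Suc' by (rule Max_range_ge)
  finally show ?case unfolding b_eq .
qed

end


lemma argmax_some: "f (SOME z. \<forall>z'. f z' \<le> f z) = Max (range (f :: 'c::finite \<Rightarrow> real))"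
proof -
  obtain z0 where z0: "Max (range f) = f z0" using Max_range_ex by blast
  have "\<forall>z'. f z' \<le> f z0" using z0 Max_range_ge[of f] by metis
  then have h: "\<forall>z'. f z' \<le> f (SOME z. \<forall>z'. f z' \<le> f z)" by (rule someI)
  show ?thesis using h[rule_format, of z0] Max_range_ge[of f "SOME z. \<forall>z'. f z' \<le> f z"] z0 by simp
qed

context rc begin

definition optz :: "nat \<Rightarrow> nat \<Rightarrow> ('a \<Rightarrow> real) \<Rightarrow> ('a \<Rightarrow> bool) \<times> 'b" where
  "optz k t b = (SOME z. \<forall>z'. Qf k t b z' \<le> Qf k t b z)"

lemma optz: "Qf k t b (optz k t b) = UU (Suc k) t b"
  unfolding optz_def UU_Suc' by (rule argmax_some)

definition opta :: "nat \<Rightarrow> nat \<Rightarrow> 'a \<Rightarrow> 'b" where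
  "opta k t x = (SOME a. \<forall>a'. \<gamma>^t * R x a' + UU k (Suc t) (pmf (P a' x)) \<le> \<gamma>^t * R x a + UU k (Suc t) (pmf (P a x)))"

lemma opta: "\<gamma>^t * R x (opta k t x) + UU k (Suc t) (pmf (P (opta k t x) x)) = VV k t x"
  unfolding opta_def VV_def by (rule argmax_some[of "\<lambda>a. \<gamma>^t * R x a + UU k (Suc t) (pmf (P a x))"])

lemma Qf_mult: "0 \<le> c \<Longrightarrow> Qf k t (\<lambda>x. c * b x) z = c * Qf k t b z"
  unfolding Qf_def upd_mult by (simp add: UU_mult sum_distrib_left algebra_simps if_distrib cong: if_cong)

primrec phb :: "nat \<Rightarrow> nat \<Rightarrow> ('a \<Rightarrow> real) \<Rightarrow> nat \<Rightarrow> 'a \<Rightarrow> real" where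
  "phb T i b 0 = b"
| "phb T i b (Suc n) = upd (phb T i b n) (fst (optz (T - (i + n) - 1) (i + n) (phb T i b n)))
                                         (snd (optz (T - (i + n) - 1) (i + n) (phb T i b n)))"

definition beliefAt :: "nat \<Rightarrow> 'a pmf \<Rightarrow> nat \<Rightarrow> (nat \<times> 'a) option \<Rightarrow> 'a \<Rightarrow> real" where
  "beliefAt T mu t lt = (case lt of None \<Rightarrow> phb T 0 (pmf mu) t
     | Some (D, s) \<Rightarrow> phb T (t - D + 1) (pmf (P (opta (T - (t - D) - 1) (t - D) s) s)) (D - 1))"

definition fS :: "nat \<Rightarrow> 'a pmf \<Rightarrow> nat \<Rightarrow> 'a \<Rightarrow> (nat \<times> 'a) option \<Rightarrow> bool" where
  "fS T mu t x lt = fst (optz (T - t - 1) t (beliefAt T mu t lt)) x"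

definition gS :: "nat \<Rightarrow> 'a pmf \<Rightarrow> nat \<Rightarrow> (nat \<times> 'a) option \<Rightarrow> 'b" where
  "gS T mu t lt = (case lt of None \<Rightarrow> snd (optz (T - t - 1) t (beliefAt T mu t None))
     | Some (D, s) \<Rightarrow> if D = 0 then opta (T - t - 1) t s else snd (optz (T - t - 1) t (beliefAt T mu t lt)))"

lemma beliefAt_None: "length os = t \<Longrightarrow> T = Suc (t + k) \<Longrightarrow>
  beliefAt T mu (Suc t) (last_tx (Suc t) (os @ [None])) =
  upd (beliefAt T mu t (last_tx t os)) (fst (optz k t (beliefAt T mu t (last_tx t os)))) (snd (optz k t (beliefAt T mu t (last_tx t os))))"
proof -
  assume l: "length os = t" and T: "T = Suc (t + k)"
  have lt: "last_tx (Suc t) (os @ [None]) = map_option (\<lambda>(D,s). (Suc D, s)) (last_tx t os)"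
    using last_tx_Suc[of "os @ [None]" t] l by (simp add: last_tx_None)
  show ?thesis
  proof (cases "last_tx t os")
    case None
    then show ?thesis unfolding lt beliefAt_def using T by simp
  next
    case (Some p)
    obtain D s where p: "p = (D, s)" by (cases p)
    have D: "0 < D" "D \<le> t" using last_tx_pos[OF l] last_tx_le Some p by auto
    have e1: "Suc t - Suc D = t - D" by simp
    have e2: "t - D + 1 + (D - 1) = t" using D by simp
    have e3: "Suc D - 1 = Suc (D - 1)" using D by simp
    show ?thesis unfolding lt beliefAt_def using Some p T D
      by (simp add: e1 e2 e3 del: phb.simps) (cases D, simp_all)
  qed
qed

lemma beliefAt_Some: "length os = t \<Longrightarrow> T = Suc (t + k) \<Longrightarrow>
  beliefAt T mu (Suc t) (last_tx (Suc t) (os @ [Some x])) = pmf (P (opta k t x) x)"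
  unfolding beliefAt_def last_tx_Some by simp

end


context rc begin

lemma LB:
  fixes I :: "'a list set" and hs :: "'a list \<Rightarrow> 'a list"
  shows "finite I \<Longrightarrow> \<forall>i\<in>I. length (hs i) = Suc t \<and> obs (struct_enc (fS T mu)) (hs i) t = os \<Longrightarrow> \<forall>i\<in>I. 0 \<le> w i \<Longrightarrow>
   length os = t \<Longrightarrow> T = t + k \<Longrightarrow> 0 \<le> c \<Longrightarrow>
   (\<lambda>x. \<Sum>i\<in>I. if hs i ! t = x then w i else 0) = (\<lambda>x. c * beliefAt T mu t (last_tx t os) x) \<Longrightarrow>
   (\<Sum>i\<in>I. w i * Wg (struct_enc (fS T mu)) (struct_dec (gS T mu)) k t (hs i)) = UU k t (\<lambda>x. c * beliefAt T mu t (last_tx t os) x)"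
proof (induction k arbitrary: t I hs w os c)
  case 0 then show ?case by simp
next
  case (Suc k)
  note fI = Suc.prems(1) and H = Suc.prems(2) and wn = Suc.prems(3) and los = Suc.prems(4)
    and T = Suc.prems(5) and c0 = Suc.prems(6) and agg = Suc.prems(7)
  let ?e = "struct_enc (fS T mu)" and ?d = "struct_dec (gS T mu)"
  let ?c = "\<lambda>i. comm ?e (hs i) t"
  define bt where "bt = beliefAt T mu t (last_tx t os)"
  define zs where "zs = optz k t bt"
  define a0 where "a0 = a0f ?d os t"
  define a1 where "a1 = a1f ?d os t"
  define b where "b x = c * bt x" for x
  define b0 where "b0 x = (\<Sum>i\<in>I. if hs i ! t = x \<and> \<not> ?c i then w i else 0)" for x
  define b1 where "b1 x = (\<Sum>i\<in>I. if hs i ! t = x \<and> ?c i then w i else 0)" for x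
  have Hl: "\<forall>i\<in>I. length (hs i) = Suc t" using H by simp
  have kk: "T - t - 1 = k" using T by simp
  have T': "T = Suc (t + k)" using T by simp
  have cm: "?c i = fst zs (hs i ! t)" if "i \<in> I" for i
  proof -
    have l: "length (hs i) = Suc t" "obs ?e (hs i) t = os" using H that by auto
    have "last (hs i) = hs i ! t" using l(1) by (cases "hs i" rule: rev_cases) auto
    then show ?thesis using l unfolding comm_def struct_enc_def fS_def zs_def bt_def kk
      by (simp add: last_conv_nth)
  qed
  have a0e: "a0 = snd zs"
  proof (cases "last_tx t os")
    case None
    then show ?thesis unfolding a0_def a0f_def struct_dec_def gS_def last_tx_None zs_def bt_def kk by simp
  next
    case (Some p)
    obtain D s where p: "p = (D, s)" by (cases p)
    have "0 < D" using last_tx_pos[OF los] Some p by auto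
    then show ?thesis using Some p unfolding a0_def a0f_def struct_dec_def gS_def last_tx_None zs_def bt_def kk by simp
  qed
  have a1e: "a1 x = opta k t x" for x
    unfolding a1_def a1f_def struct_dec_def gS_def last_tx_Some los kk by simp
  have b0e: "b0 x = (if fst zs x then 0 else b x)" for x
  proof -
    have "b0 x = (if fst zs x then 0 else (\<Sum>i\<in>I. if hs i ! t = x then w i else 0))"
      unfolding b0_def using cm by (auto intro!: sum.cong sum.neutral)
    then show ?thesis using fun_cong[OF agg, of x] unfolding b_def bt_def by simp
  qed
  have b1e: "b1 x = (if fst zs x then b x else 0)" for x
  proof -
    have "b1 x = (if fst zs x then (\<Sum>i\<in>I. if hs i ! t = x then w i else 0) else 0)"
      unfolding b1_def using cm by (auto intro!: sum.cong sum.neutral)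
    then show ?thesis using fun_cong[OF agg, of x] unfolding b_def bt_def by simp
  qed
  have b1n: "0 \<le> b1 x" for x unfolding b1_def using wn by (auto intro!: sum_nonneg)
  have T1: "(\<Sum>i\<in>I. if ?c i then 0 else w i * (\<gamma>^t * R (hs i ! t) a0)) = (\<Sum>x\<in>UNIV. b0 x * (\<gamma>^t * R x a0))"
    unfolding b0_def sum_group[OF fI] by (auto intro!: sum.cong)
  have agg0: "(\<lambda>y. \<Sum>x\<in>UNIV. b0 x * pmf (P a0 x) y) = (\<lambda>y. c * beliefAt T mu (Suc t) (last_tx (Suc t) (os @ [None])) y)"
  proof -
    have "(\<lambda>y. \<Sum>x\<in>UNIV. b0 x * pmf (P a0 x) y) = upd b (fst zs) (snd zs)"
      unfolding upd_def b0e a0e by simp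
    also have "\<dots> = (\<lambda>y. c * upd bt (fst zs) (snd zs) y)" unfolding b_def upd_mult ..
    finally show ?thesis unfolding beliefAt_None[OF los T'] zs_def bt_def .
  qed
  have T2: "(\<Sum>j\<in>{i\<in>I. \<not> ?c i} \<times> UNIV. (w (fst j) * pmf (P a0 (hs (fst j) ! t)) (snd j)) * Wg ?e ?d k (Suc t) (hs (fst j) @ [snd j]))
     = UU k (Suc t) (\<lambda>y. \<Sum>x\<in>UNIV. b0 x * pmf (P a0 x) y)"
  proof -
    let ?J = "(\<lambda>p. fst p @ [snd p]) ` ({i\<in>I. \<not> ?c i} \<times> (UNIV :: 'a set))"
    have "(\<Sum>j\<in>?J. (w (butlast j) * pmf (P a0 (hs (butlast j) ! t)) (last j)) * Wg ?e ?d k (Suc t) (hs (butlast j) @ [last j]))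
       = UU k (Suc t) (\<lambda>y. c * beliefAt T mu (Suc t) (last_tx (Suc t) (os @ [None])) y)"
    proof (rule Suc.IH)
      show "finite ?J" using fI by simp
      show "\<forall>j\<in>?J. length (hs (butlast j) @ [last j]) = Suc (Suc t) \<and> obs ?e (hs (butlast j) @ [last j]) (Suc t) = os @ [None]"
        using new_hist[OF H, of _ "\<lambda>i. \<not> ?c i"] by (auto simp del: obs.simps)
      show "\<forall>j\<in>?J. 0 \<le> w (butlast j) * pmf (P a0 (hs (butlast j) ! t)) (last j)"
        using wn by auto
      show "length (os @ [None]) = Suc t" using los by simp
      show "T = Suc t + k" using T by simp
      show "0 \<le> c" by (rule c0)
      show "(\<lambda>y. \<Sum>j\<in>?J. if (hs (butlast j) @ [last j]) ! Suc t = y then w (butlast j) * pmf (P a0 (hs (butlast j) ! t)) (last j) else 0)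
          = (\<lambda>y. c * beliefAt T mu (Suc t) (last_tx (Suc t) (os @ [None])) y)"
        unfolding reidx agg0[symmetric] b0_def
        using agg_new[OF fI Hl, where Q = "\<lambda>i. \<not> ?c i" and w = w and aa = "\<lambda>_. a0"] by (simp cong: if_cong)
    qed
    then show ?thesis unfolding reidx agg0 by (simp cong: if_cong)
  qed
  have T3: "(\<Sum>i\<in>I. if ?c i \<and> hs i ! t = x then w i * (\<gamma>^t * R x (a1 x) - \<gamma>^t * \<beta>) else 0)
        + (\<Sum>j\<in>{i\<in>I. ?c i \<and> hs i ! t = x} \<times> UNIV. (w (fst j) * pmf (P (a1 x) x) (snd j)) * Wg ?e ?d k (Suc t) (hs (fst j) @ [snd j]))
     = b1 x * (VV k t x - \<gamma>^t * \<beta>)" for x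
  proof -
    have f1: "(\<Sum>i\<in>I. if ?c i \<and> hs i ! t = x then w i * (\<gamma>^t * R x (a1 x) - \<gamma>^t * \<beta>) else 0) = b1 x * (\<gamma>^t * R x (a1 x) - \<gamma>^t * \<beta>)"
      unfolding b1_def by (auto simp: sum_distrib_right intro!: sum.cong)
    have agg1': "(\<lambda>y. b1 x * pmf (P (a1 x) x) y) = (\<lambda>y. b1 x * beliefAt T mu (Suc t) (last_tx (Suc t) (os @ [Some x])) y)"
      unfolding beliefAt_Some[OF los T'] a1e ..
    let ?J = "(\<lambda>p. fst p @ [snd p]) ` ({i\<in>I. ?c i \<and> hs i ! t = x} \<times> (UNIV :: 'a set))"
    have "(\<Sum>j\<in>?J. (w (butlast j) * pmf (P (a1 x) x) (last j)) * Wg ?e ?d k (Suc t) (hs (butlast j) @ [last j]))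
       = UU k (Suc t) (\<lambda>y. b1 x * beliefAt T mu (Suc t) (last_tx (Suc t) (os @ [Some x])) y)"
    proof (rule Suc.IH)
      show "finite ?J" using fI by simp
      show "\<forall>j\<in>?J. length (hs (butlast j) @ [last j]) = Suc (Suc t) \<and> obs ?e (hs (butlast j) @ [last j]) (Suc t) = os @ [Some x]"
        using new_hist[OF H, of _ "\<lambda>i. ?c i \<and> hs i ! t = x"] by (auto simp del: obs.simps)
      show "\<forall>j\<in>?J. 0 \<le> w (butlast j) * pmf (P (a1 x) x) (last j)"
        using wn by auto
      show "length (os @ [Some x]) = Suc t" using los by simp
      show "T = Suc t + k" using T by simp
      show "0 \<le> b1 x" by (rule b1n)
      show "(\<lambda>y. \<Sum>j\<in>?J. if (hs (butlast j) @ [last j]) ! Suc t = y then w (butlast j) * pmf (P (a1 x) x) (last j) else 0)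
          = (\<lambda>y. b1 x * beliefAt T mu (Suc t) (last_tx (Suc t) (os @ [Some x])) y)"
        unfolding reidx
        using trans[OF agg1[OF fI Hl, where Q = ?c and x = x and w = w and M = "P (a1 x) x"] agg1'[unfolded b1_def]]
        by (simp add: b1_def cong: if_cong)
    qed
    then have f2: "(\<Sum>j\<in>{i\<in>I. ?c i \<and> hs i ! t = x} \<times> UNIV. (w (fst j) * pmf (P (a1 x) x) (snd j)) * Wg ?e ?d k (Suc t) (hs (fst j) @ [snd j]))
        = b1 x * UU k (Suc t) (pmf (P (a1 x) x))"
      unfolding reidx agg1'[symmetric] UU_mult[OF b1n, where k = k and t = "Suc t" and b = "pmf (P (a1 x) x)", symmetric]
      by (simp cong: if_cong)
    have v: "VV k t x = \<gamma>^t * R x (opta k t x) + UU k (Suc t) (pmf (P (opta k t x) x))" using opta[of t x k] by simp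
    show ?thesis unfolding f1 f2 unfolding a1e v by (simp add: algebra_simps)
  qed
  have "(\<Sum>i\<in>I. w i * Wg ?e ?d (Suc k) t (hs i)) =
      (\<Sum>x\<in>UNIV. b0 x * (\<gamma>^t * R x a0)) + UU k (Suc t) (\<lambda>y. \<Sum>x\<in>UNIV. b0 x * pmf (P a0 x) y)
      + (\<Sum>x\<in>UNIV. b1 x * (VV k t x - \<gamma>^t * \<beta>))"
    unfolding decomp[OF fI H, where w = w and k = k and d = ?d] a0_def[symmetric] a1_def[symmetric] T1 T2 T3 ..
  also have "\<dots> = GG k (Suc t) (\<lambda>x. VV k t x - \<gamma>^t * \<beta>) (\<lambda>x. \<gamma>^t * R x a0) (\<lambda>x y. pmf (P a0 x) y) b0 b1"
    unfolding GG_def by simp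
  also have "b0 = (\<lambda>x. if fst zs x then 0 else b x)" using b0e by auto
  also have "b1 = (\<lambda>x. if fst zs x then b x else 0)" using b1e by auto
  also have "GG k (Suc t) (\<lambda>x. VV k t x - \<gamma>^t * \<beta>) (\<lambda>x. \<gamma>^t * R x a0) (\<lambda>x y. pmf (P a0 x) y)
       (\<lambda>x. if fst zs x then 0 else b x) (\<lambda>x. if fst zs x then b x else 0) = Qf k t b (fst zs, a0)"
    by (rule GG_vertex_Qf)
  also have "\<dots> = c * Qf k t bt zs" unfolding b_def a0e using Qf_mult[OF c0] by simp
  also have "\<dots> = c * UU (Suc k) t bt" unfolding zs_def optz ..
  also have "\<dots> = UU (Suc k) t (\<lambda>x. c * bt x)" using UU_mult[OF c0] by simp
  finally show ?case unfolding bt_def .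
qed

end


context rc begin

lemma J_Wg: "(\<Sum>t<T. \<gamma>^t * stage P mu r \<beta> e d t) = (\<Sum>s\<in>UNIV. pmf mu s * Wg e d T 0 [s])"
proof -
  have "measure_pmf.expectation (hist P mu e d 0) (Wg e d T 0) = (\<Sum>t\<in>{0..<0+T}. \<gamma>^t * stage P mu r \<beta> e d t)"
    by (rule Wg_hist)
  then show ?thesis by (simp add: exp_finite_UNIV atLeast0LessThan)
qed

lemma sum_singl: "(\<Sum>h\<in>range (\<lambda>s::'a. [s]). g h) = (\<Sum>s\<in>UNIV. g [s])"
  by (subst sum.reindex) (auto simp: inj_on_def)

lemma agg_init: "(\<lambda>x. \<Sum>h\<in>range (\<lambda>s::'a. [s]). if h ! 0 = x then pmf mu (hd h) else 0) = pmf mu"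
proof
  fix x
  show "(\<Sum>h\<in>range (\<lambda>s::'a. [s]). if h ! 0 = x then pmf mu (hd h) else 0) = pmf mu x"
    by (subst sum.reindex) (auto simp: inj_on_def sum.delta')
qed

lemma J_le: "(\<Sum>s\<in>UNIV. pmf mu s * Wg e d T 0 [s]) \<le> UU T 0 (pmf mu)"
proof -
  have "(\<Sum>h\<in>range (\<lambda>s::'a. [s]). pmf mu (hd h) * Wg e d T 0 h) \<le> UU T 0 (\<lambda>x. \<Sum>h\<in>range (\<lambda>s::'a. [s]). if h ! 0 = x then pmf mu (hd h) else 0)"
    by (rule UB[where os = "[]"]) auto
  then show ?thesis unfolding agg_init unfolding sum_singl by simp
qed

lemma J_struct: "(\<Sum>s\<in>UNIV. pmf mu s * Wg (struct_enc (fS T mu)) (struct_dec (gS T mu)) T 0 [s]) = UU T 0 (pmf mu)"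
proof -
  have b0: "beliefAt T mu 0 (last_tx 0 []) = pmf mu" unfolding beliefAt_def last_tx_0 by simp
  have "(\<Sum>h\<in>range (\<lambda>s::'a. [s]). pmf mu (hd h) * Wg (struct_enc (fS T mu)) (struct_dec (gS T mu)) T 0 h)
      = UU T 0 (\<lambda>x. 1 * beliefAt T mu 0 (last_tx 0 []) x)"
    by (rule LB) (auto simp: agg_init b0)
  then show ?thesis unfolding sum_singl b0 by simp
qed

end

theorem theorem1:
  fixes P :: "'b::finite \<Rightarrow> 'a::finite \<Rightarrow> 'a pmf"
    and mu :: "'a pmf"
    and r :: "'a \<Rightarrow> 'b \<Rightarrow> 'a \<Rightarrow> real"
    and \<gamma> \<beta> :: real
  assumes "0 \<le> \<gamma>" and "\<gamma> < 1" and "\<beta> > 0"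
  shows "(SUP ed \<in> (UNIV :: ((nat \<Rightarrow> 'a list \<Rightarrow> 'a option list \<Rightarrow> bool) \<times>
                              (nat \<Rightarrow> 'a option list \<Rightarrow> 'b list \<Rightarrow> 'b)) set).
            objective P mu r \<gamma> \<beta> (fst ed) (snd ed))
       = (SUP fg \<in> (UNIV :: ((nat \<Rightarrow> 'a \<Rightarrow> (nat \<times> 'a) option \<Rightarrow> bool) \<times>
                              (nat \<Rightarrow> (nat \<times> 'a) option \<Rightarrow> 'b)) set).
            objective P mu r \<gamma> \<beta> (struct_enc (fst fg)) (struct_dec (snd fg)))"
proof -
  interpret rc P r \<gamma> \<beta> .
  note g0 = assms(1) and g1 = assms(2) and bpos = assms(3)
  define Kr where "Kr = Max (range (\<lambda>p::'a \<times> 'b \<times> 'a. \<bar>r (fst p) (fst (snd p)) (snd (snd p))\<bar>))"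
  have Kr: "\<bar>r x a y\<bar> \<le> Kr" for x a y
    unfolding Kr_def using Max_range_ge[of "\<lambda>p::'a \<times> 'b \<times> 'a. \<bar>r (fst p) (fst (snd p)) (snd (snd p))\<bar>" "(x, a, y)"] by simp
  define B where "B = Kr + \<beta>"
  have sb: "\<bar>stage P mu r \<beta> e d t\<bar> \<le> B" for e d t
  proof -
    let ?f = "\<lambda>h. r (h ! t) (act e d h t) (h ! Suc t) - \<beta> * (if comm e h t then 1 else 0)"
    have int: "integrable (measure_pmf (hist P mu e d (Suc t))) ?f"
      by (rule integrable_measure_pmf_finite[OF finite_hist])
    have ub: "?f h \<le> B" for h using Kr[of "h ! t" "act e d h t" "h ! Suc t"] bpos unfolding B_def by auto
    have lb: "- B \<le> ?f h" for h using Kr[of "h ! t" "act e d h t" "h ! Suc t"] bpos unfolding B_def by auto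
    have "stage P mu r \<beta> e d t \<le> B" unfolding stage_def
      by (rule measure_pmf.integral_le_const[OF int]) (simp add: ub)
    moreover have "- B \<le> stage P mu r \<beta> e d t" unfolding stage_def
      by (rule measure_pmf.integral_ge_const[OF int]) (simp add: lb)
    ultimately show ?thesis by simp
  qed
  have geo: "summable (\<lambda>n. c * \<gamma>^n)" for c using g0 g1 by (intro summable_mult summable_geometric) simp
  have geos: "(\<Sum>n. c * \<gamma>^n) = c / (1 - \<gamma>)" for c using g0 g1 by (simp add: suminf_mult suminf_geometric)
  have summ: "summable (\<lambda>t. \<gamma>^t * stage P mu r \<beta> e d t)" for e d
  proof (rule summable_comparison_test[OF _ geo[of B]])
    show "\<exists>N. \<forall>n\<ge>N. norm (\<gamma>^n * stage P mu r \<beta> e d n) \<le> B * \<gamma>^n"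
    proof (intro exI[of _ 0] allI impI)
      fix n :: nat
      have "\<gamma>^n * \<bar>stage P mu r \<beta> e d n\<bar> \<le> \<gamma>^n * B" using sb[of e d n] g0 by (intro mult_left_mono) auto
      then show "norm (\<gamma>^n * stage P mu r \<beta> e d n) \<le> B * \<gamma>^n" using g0 by (simp add: abs_mult mult.commute)
    qed
  qed
  have tail: "\<bar>objective P mu r \<gamma> \<beta> e d - (\<Sum>t<T. \<gamma>^t * stage P mu r \<beta> e d t)\<bar> \<le> B * \<gamma>^T / (1 - \<gamma>)" for e d T
  proof -
    let ?g = "\<lambda>n. \<gamma>^(n + T) * stage P mu r \<beta> e d (n + T)"
    have sg: "summable ?g" using summable_ignore_initial_segment[OF summ[of e d], of T] by simp
    have split: "objective P mu r \<gamma> \<beta> e d = (\<Sum>n. ?g n) + (\<Sum>t<T. \<gamma>^t * stage P mu r \<beta> e d t)"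
      unfolding objective_def by (rule suminf_split_initial_segment[OF summ])
    have bnd: "\<bar>?g n\<bar> \<le> (B * \<gamma>^T) * \<gamma>^n" for n
    proof -
      have "\<gamma>^(n+T) * \<bar>stage P mu r \<beta> e d (n + T)\<bar> \<le> \<gamma>^(n+T) * B"
        using sb[of e d "n + T"] g0 by (intro mult_left_mono) simp_all
      then show ?thesis using g0 by (simp add: abs_mult power_add mult_ac)
    qed
    have "(\<Sum>n. ?g n) \<le> (\<Sum>n. (B * \<gamma>^T) * \<gamma>^n)"
      using bnd by (intro suminf_le sg geo) (auto simp: abs_le_iff)
    moreover have "(\<Sum>n. - ((B * \<gamma>^T) * \<gamma>^n)) \<le> (\<Sum>n. ?g n)"
      using bnd by (intro suminf_le sg summable_minus geo) (auto simp: abs_le_iff, smt (verit))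
    moreover have "(\<Sum>n. - ((B * \<gamma>^T) * \<gamma>^n)) = - (\<Sum>n. (B * \<gamma>^T) * \<gamma>^n)"
      by (rule suminf_minus[OF geo])
    ultimately show ?thesis unfolding split geos by simp
  qed
  have Bn: "0 \<le> B" using sb[of undefined undefined 0] by simp
  have obnd: "objective P mu r \<gamma> \<beta> e d \<le> B / (1 - \<gamma>)" for e d
    using tail[of e d 0] by simp
  let ?L = "(SUP ed \<in> (UNIV :: ((nat \<Rightarrow> 'a list \<Rightarrow> 'a option list \<Rightarrow> bool) \<times>
                              (nat \<Rightarrow> 'a option list \<Rightarrow> 'b list \<Rightarrow> 'b)) set).
            objective P mu r \<gamma> \<beta> (fst ed) (snd ed))"
  let ?R = "(SUP fg \<in> (UNIV :: ((nat \<Rightarrow> 'a \<Rightarrow> (nat \<times> 'a) option \<Rightarrow> bool) \<times>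
                              (nat \<Rightarrow> (nat \<times> 'a) option \<Rightarrow> 'b)) set).
            objective P mu r \<gamma> \<beta> (struct_enc (fst fg)) (struct_dec (snd fg)))"
  have bdL: "bdd_above ((\<lambda>ed. objective P mu r \<gamma> \<beta> (fst ed) (snd ed)) ` (UNIV :: ((nat \<Rightarrow> 'a list \<Rightarrow> 'a option list \<Rightarrow> bool) \<times>
                              (nat \<Rightarrow> 'a option list \<Rightarrow> 'b list \<Rightarrow> 'b)) set))"
    by (rule bdd_aboveI2[where M = "B / (1 - \<gamma>)"]) (rule obnd)
  have bdR: "bdd_above ((\<lambda>fg. objective P mu r \<gamma> \<beta> (struct_enc (fst fg)) (struct_dec (snd fg))) ` (UNIV :: ((nat \<Rightarrow> 'a \<Rightarrow> (nat \<times> 'a) option \<Rightarrow> bool) \<times>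
                              (nat \<Rightarrow> (nat \<times> 'a) option \<Rightarrow> 'b)) set))"
    by (rule bdd_aboveI2[where M = "B / (1 - \<gamma>)"]) (rule obnd)
  have "?L \<le> ?R"
  proof (rule cSUP_least)
    show "(UNIV :: ((nat \<Rightarrow> 'a list \<Rightarrow> 'a option list \<Rightarrow> bool) \<times> (nat \<Rightarrow> 'a option list \<Rightarrow> 'b list \<Rightarrow> 'b)) set) \<noteq> {}" by simp
    fix ed :: "(nat \<Rightarrow> 'a list \<Rightarrow> 'a option list \<Rightarrow> bool) \<times> (nat \<Rightarrow> 'a option list \<Rightarrow> 'b list \<Rightarrow> 'b)"
    obtain e d where ed: "ed = (e, d)" by (cases ed)
    have step: "objective P mu r \<gamma> \<beta> e d \<le> ?R + 2 * B / (1 - \<gamma>) * \<gamma>^T" for T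
    proof -
      have "objective P mu r \<gamma> \<beta> e d \<le> (\<Sum>t<T. \<gamma>^t * stage P mu r \<beta> e d t) + B * \<gamma>^T / (1 - \<gamma>)"
        using tail[of e d T] by simp
      also have "(\<Sum>t<T. \<gamma>^t * stage P mu r \<beta> e d t) \<le> UU T 0 (pmf mu)"
        unfolding J_Wg by (rule J_le)
      also have "UU T 0 (pmf mu) = (\<Sum>t<T. \<gamma>^t * stage P mu r \<beta> (struct_enc (fS T mu)) (struct_dec (gS T mu)) t)"
        unfolding J_Wg J_struct ..
      also have "\<dots> \<le> objective P mu r \<gamma> \<beta> (struct_enc (fS T mu)) (struct_dec (gS T mu)) + B * \<gamma>^T / (1 - \<gamma>)"
        using tail[of "struct_enc (fS T mu)" "struct_dec (gS T mu)" T] by simp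
      also have "objective P mu r \<gamma> \<beta> (struct_enc (fS T mu)) (struct_dec (gS T mu)) \<le> ?R"
        using cSUP_upper[OF _ bdR, of "(fS T mu, gS T mu)"] by simp
      finally show ?thesis by simp
    qed
    have lim: "(\<lambda>T. ?R + 2 * B / (1 - \<gamma>) * \<gamma>^T) \<longlonglongrightarrow> ?R + 2 * B / (1 - \<gamma>) * 0"
      using g0 g1 by (intro tendsto_intros LIMSEQ_power_zero) simp
    have "objective P mu r \<gamma> \<beta> e d \<le> ?R"
      using LIMSEQ_le_const[OF lim] step by simp
    then show "objective P mu r \<gamma> \<beta> (fst ed) (snd ed) \<le> ?R" using ed by simp
  qed
  moreover have "?R \<le> ?L"
  proof (rule cSUP_least)
    show "(UNIV :: ((nat \<Rightarrow> 'a \<Rightarrow> (nat \<times> 'a) option \<Rightarrow> bool) \<times> (nat \<Rightarrow> (nat \<times> 'a) option \<Rightarrow> 'b)) set) \<noteq> {}" by simp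
    fix fg :: "(nat \<Rightarrow> 'a \<Rightarrow> (nat \<times> 'a) option \<Rightarrow> bool) \<times> (nat \<Rightarrow> (nat \<times> 'a) option \<Rightarrow> 'b)"
    show "objective P mu r \<gamma> \<beta> (struct_enc (fst fg)) (struct_dec (snd fg)) \<le> ?L"
      using cSUP_upper[OF _ bdL, of "(struct_enc (fst fg), struct_dec (snd fg))"] by simp
  qed
  ultimately show ?thesis by (rule antisym)
qed


end
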